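(* Let $k\ge4$, let $d_{\mathrm{ubd}}(k)=2^{k-1}k\log2$, and let $d_{\mathrm{lbd}}(4)=16.7$, $d_{\mathrm{lbd}}(k)=(2^{k-1}-2)k\log2$ for $k\ge5$. For $d\in[d_{\mathrm{lbd}}(k),d_{\mathrm{ubd}}(k)]$ let $x(k,d)$ be the unique solution of $\Psi_d(x)=x$ in $[\frac12-\frac1{2^k},\frac12]$ and $\Phi^\star(d)=\Phi_k(d,x(k,d))$. Then $d\mapsto\Phi^\star(d)$ is continuous on $[d_{\mathrm{lbd}}(k),d_{\mathrm{ubd}}(k)]$, $\Phi^\star(d_{\mathrm{lbd}}(k))>0$ and $\Phi^\star(d_{\mathrm{ubd}}(k))<0$.
   Context: $\hat\Psi(x)=\frac{1-2x^{k-1}}{1-x^{k-1}}$, $\dot\Psi(v)=\frac{1-v^{d-1}}{2-v^{d-1}}$, $\Psi_d=\dot\Psi\circ\hat\Psi$; $\Phi_k(d,x)=-\log(1-x)-d(1-k^{-1}-d^{-1})\log(1-2x^k)+(d-1)\log(1-x^{k-1})$. (Existence and uniqueness of $x(k,d)$ in this range is known.) *)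

theory Defs
  imports "HOL-Analysis.Analysis"
begin

definition Psi_hat :: "nat \<Rightarrow> real \<Rightarrow> real" where
  "Psi_hat k x = (1 - 2 * x ^ (k - 1)) / (1 - x ^ (k - 1))"

definition Psi_dot :: "real \<Rightarrow> real \<Rightarrow> real" where
  "Psi_dot d v = (1 - v powr (d - 1)) / (2 - v powr (d - 1))"

definition Psi :: "nat \<Rightarrow> real \<Rightarrow> real \<Rightarrow> real" where
  "Psi k d = Psi_dot d \<circ> Psi_hat k"

definition Phi :: "nat \<Rightarrow> real \<Rightarrow> real \<Rightarrow> real" where
  "Phi k d x = - ln (1 - x) - d * (1 - 1 / real k - 1 / d) * ln (1 - 2 * x ^ k)
     + (d - 1) * ln (1 - x ^ (k - 1))"

definition d_ubd :: "nat \<Rightarrow> real" where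
  "d_ubd k = 2 ^ (k - 1) * real k * ln 2"

definition d_lbd :: "nat \<Rightarrow> real" where
  "d_lbd k = (if k = 4 then 16.7 else (2 ^ (k - 1) - 2) * real k * ln 2)"

definition xfix :: "nat \<Rightarrow> real \<Rightarrow> real" where
  "xfix k d = (THE x. x \<in> {1/2 - 1/2^k .. 1/2} \<and> Psi k d x = x)"

definition Phi_star :: "nat \<Rightarrow> real \<Rightarrow> real" where
  "Phi_star k d = Phi k d (xfix k d)"

end

theory Submission
  imports Defs
begin



definition AA :: "real \<Rightarrow> real" where "AA x = ln (1 - x) - ln (1 - 2*x)"
definition BB :: "nat \<Rightarrow> real \<Rightarrow> real" where "BB k x = ln (1 - x^(k-1)) - ln (1 - 2*x^(k-1))"
definition RR :: "nat \<Rightarrow> real \<Rightarrow> real" where "RR k x = AA x / BB k x"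

lemma a_bounds:
  fixes x :: real assumes k: "k \<ge> 4" and x: "0 < x" "x \<le> 1/2"
  shows "0 < x^(k-1)" "x^(k-1) \<le> 2*(1/2)^k" "x^(k-1) \<le> 1/8"
proof -
  show "0 < x^(k-1)" using x by simp
  have "x^(k-1) \<le> (1/2)^(k-1)" using x by (intro power_mono) auto
  also have "(1/2::real)^(k-1) = 2*(1/2)^k"
  proof -
    obtain m where m: "k = Suc m" using k by (cases k) auto
    show ?thesis unfolding m by simp
  qed
  finally show "x^(k-1) \<le> 2*(1/2)^k" .
  have "(1/2::real)^k \<le> (1/2)^4" using k by (intro power_decreasing) auto
  moreover have "(1/2::real)^4 = 1/16" by (simp add: power_divide)
  ultimately show "x^(k-1) \<le> 1/8" using \<open>x^(k-1) \<le> 2*(1/2)^k\<close> by linarith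
qed

lemma BB_pos: assumes k: "k \<ge> 4" and x: "0 < x" "x \<le> 1/2" shows "BB k x > 0"
  and "BB k x \<ge> x^(k-1) / (1 - x^(k-1))"
proof -
  let ?a = "x^(k-1)"
  have a: "0 < ?a" "?a \<le> 1/8" using a_bounds[OF k x] by auto
  have "BB k x = - ln ((1 - 2*?a)/(1 - ?a))" unfolding BB_def using a by (simp add: ln_div)
  also have "\<dots> \<ge> 1 - (1 - 2*?a)/(1 - ?a)" using ln_le_minus_one[of "(1 - 2*?a)/(1 - ?a)"] a by simp
  finally have *: "BB k x \<ge> 1 - (1 - 2*?a)/(1 - ?a)" .
  have "1 - (1 - 2*?a)/(1 - ?a) = ?a/(1-?a)" using a by (simp add: field_simps)
  thus "BB k x \<ge> ?a / (1 - ?a)" using * by simp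
  moreover have "?a/(1-?a) > 0" using a by simp
  ultimately show "BB k x > 0" by linarith
qed

lemma fix_iff:
  assumes k: "k \<ge> 4" and d: "d \<ge> 1" and z: "0 < z" "z \<le> 1/2"
  shows "Psi k d z = z \<longleftrightarrow> z < 1/2 \<and> (d-1) * BB k z = AA z"
proof -
  define a where "a = z^(k-1)"
  have a: "0 < a" "a \<le> 1/8" using a_bounds[OF k z] a_def by auto
  define v where "v = (1 - 2*a)/(1 - a)"
  have v: "0 < v" "v < 1" using a by (auto simp: v_def field_simps)
  define w where "w = v powr (d-1)"
  have w: "w = exp ((d-1) * ln v)" using v by (simp add: w_def powr_def)
  have lnv: "ln v < 0" using v by simp
  have w01: "0 < w" "w \<le> 1" using w lnv d by (auto simp: mult_nonneg_nonpos)
  have P: "Psi k d z = (1 - w)/(2 - w)"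
    by (simp add: Psi_def Psi_hat_def Psi_dot_def w_def v_def a_def)
  have "Psi k d z = z \<longleftrightarrow> w*(1-z) = 1 - 2*z" using w01 unfolding P by (auto simp: field_simps)
  also have "\<dots> \<longleftrightarrow> z < 1/2 \<and> (d-1) * BB k z = AA z"
  proof (cases "z = 1/2")
    case True
    show ?thesis unfolding True using w01 by simp
  next
    case False
    hence zl: "z < 1/2" using z by simp
    have "w*(1-z) = 1 - 2*z \<longleftrightarrow> w = (1-2*z)/(1-z)" using zl by (auto simp: field_simps)
    also have "\<dots> \<longleftrightarrow> ln w = ln ((1-2*z)/(1-z))" using w01 zl by (intro ln_inj_iff[symmetric]) auto
    also have "ln w = (d-1) * (ln (1 - 2*a) - ln (1 - a))" using w a by (simp add: v_def ln_div)
    also have "ln ((1-2*z)/(1-z)) = ln (1-2*z) - ln (1-z)" using zl by (simp add: ln_div)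
    also have "(d - 1) * (ln (1 - 2 * a) - ln (1 - a)) = ln (1 - 2 * z) - ln (1 - z) \<longleftrightarrow> (d-1) * BB k z = AA z"
      unfolding BB_def AA_def a_def by (auto simp: algebra_simps)
    finally show ?thesis using zl by simp
  qed
  finally show ?thesis .
qed



lemma ln_up3: fixes t :: real assumes "t \<ge> 0" shows "ln (1 + t) \<le> t - t^2/2 + t^3/3"
proof -
  let ?f = "\<lambda>t::real. t - t^2/2 + t^3/3 - ln (1 + t)"
  have "?f 0 \<le> ?f t"
  proof (rule DERIV_nonneg_imp_nondecreasing[OF assms])
    fix x :: real assume x: "0 \<le> x" "x \<le> t"
    have "DERIV ?f x :> 1 - x + x^2 - 1/(1+x)"
      using x by (auto intro!: derivative_eq_intros simp: field_simps power2_eq_square)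
    moreover have "1 - x + x^2 - 1/(1+x) = x^3/(1+x)" using x by (simp add: field_simps power2_eq_square power3_eq_cube)
    ultimately show "\<exists>y. DERIV ?f x :> y \<and> 0 \<le> y" using x by fastforce
  qed
  thus ?thesis by simp
qed

lemma ln_up5: fixes t :: real assumes "t \<ge> 0" shows "ln (1 + t) \<le> t - t^2/2 + t^3/3 - t^4/4 + t^5/5"
proof -
  let ?f = "\<lambda>t::real. t - t^2/2 + t^3/3 - t^4/4 + t^5/5 - ln (1 + t)"
  have "?f 0 \<le> ?f t"
  proof (rule DERIV_nonneg_imp_nondecreasing[OF assms])
    fix x :: real assume x: "0 \<le> x" "x \<le> t"
    have "DERIV ?f x :> 1 - x + x^2 - x^3 + x^4 - 1/(1+x)"
      using x by (auto intro!: derivative_eq_intros simp: field_simps power2_eq_square)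
    moreover have "1 - x + x^2 - x^3 + x^4 - 1/(1+x) = x^5/(1+x)" using x
      by (simp add: field_simps power2_eq_square power3_eq_cube) (simp add: algebra_simps power_def)
    ultimately show "\<exists>y. DERIV ?f x :> y \<and> 0 \<le> y" using x by fastforce
  qed
  thus ?thesis by simp
qed

lemma ln_low4: fixes t :: real assumes "t \<ge> 0" shows "t - t^2/2 + t^3/3 - t^4/4 \<le> ln (1 + t)"
proof -
  let ?f = "\<lambda>t::real. ln (1 + t) - (t - t^2/2 + t^3/3 - t^4/4)"
  have "?f 0 \<le> ?f t"
  proof (rule DERIV_nonneg_imp_nondecreasing[OF assms])
    fix x :: real assume x: "0 \<le> x" "x \<le> t"
    have "DERIV ?f x :> 1/(1+x) - (1 - x + x^2 - x^3)"
      using x by (auto intro!: derivative_eq_intros simp: field_simps power2_eq_square)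
    moreover have "1/(1+x) - (1 - x + x^2 - x^3) = x^4/(1+x)" using x
      by (simp add: field_simps power2_eq_square power3_eq_cube) (simp add: algebra_simps power_def)
    ultimately show "\<exists>y. DERIV ?f x :> y \<and> 0 \<le> y" using x by fastforce
  qed
  thus ?thesis by simp
qed

lemma ln_low2: fixes t :: real assumes "t \<ge> 0" shows "t - t^2/2 \<le> ln (1 + t)"
proof -
  let ?f = "\<lambda>t::real. ln (1 + t) - (t - t^2/2)"
  have "?f 0 \<le> ?f t"
  proof (rule DERIV_nonneg_imp_nondecreasing[OF assms])
    fix x :: real assume x: "0 \<le> x" "x \<le> t"
    have "DERIV ?f x :> 1/(1+x) - (1 - x)"
      using x by (auto intro!: derivative_eq_intros simp: field_simps power2_eq_square)
    moreover have "1/(1+x) - (1 - x) = x^2/(1+x)" using x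
      by (simp add: field_simps power2_eq_square)
    ultimately show "\<exists>y. DERIV ?f x :> y \<and> 0 \<le> y" using x by fastforce
  qed
  thus ?thesis by simp
qed

lemma mln_up: fixes t :: real assumes "t \<ge> 0" "t < 1" shows "- ln (1 - t) \<le> t + t^2/(2*(1-t))"
proof -
  let ?f = "\<lambda>t::real. t + t^2/(2*(1-t)) + ln (1 - t)"
  have "?f 0 \<le> ?f t"
  proof (rule DERIV_nonneg_imp_nondecreasing[OF assms(1)])
    fix x :: real assume x: "0 \<le> x" "x \<le> t"
    have h: "1 - x \<noteq> 0" "2 - 2*x \<noteq> 0" using x assms by auto
    have "DERIV ?f x :> x^2/(2*(1-x)^2)"
      using x assms apply (auto intro!: derivative_eq_intros)
      using h apply (simp add: divide_simps power2_eq_square)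
      apply (simp add: algebra_simps)
      done
    thus "\<exists>y. DERIV ?f x :> y \<and> 0 \<le> y" by fastforce
  qed
  thus ?thesis by simp
qed

lemma ln2_low: "0.688 \<le> ln (2::real)"
proof -
  have "ln (2::real) = ln (1 + 1/3) + ln (1 + 1/2)" using ln_mult[of "4/3::real" "3/2"] by simp
  moreover have "(1/3) - (1/3)^2/2 + (1/3)^3/3 - (1/3)^4/4 \<le> ln (1 + 1/3::real)" by (rule ln_low4) simp
  moreover have "(1/2) - (1/2)^2/2 + (1/2)^3/3 - (1/2)^4/4 \<le> ln (1 + 1/2::real)" by (rule ln_low4) simp
  ultimately show ?thesis by (simp add: power_divide)
qed

lemma ln2_up: "ln (2::real) \<le> 0.6934"
proof -
  have e: "(5/4::real)^3 * (128/125) = 2" by (simp add: power_divide)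
  have "ln (2::real) = ln ((5/4)^3 * (128/125))" by (simp only: e)
  also have "\<dots> = ln ((5/4)^3) + ln (128/125)" by (rule ln_mult_pos) auto
  also have "ln ((5/4::real)^3) = 3 * ln (5/4)" using ln_realpow[of "5/4::real" 3] by simp
  finally have "ln (2::real) = 3 * ln (1 + 1/4) + ln (1 + 3/125)" by simp
  moreover have "ln (1 + 1/4::real) \<le> (1/4) - (1/4)^2/2 + (1/4)^3/3 - (1/4)^4/4 + (1/4)^5/5" by (rule ln_up5) simp
  moreover have "ln (1 + 3/125::real) \<le> (3/125) - (3/125)^2/2 + (3/125)^3/3" by (rule ln_up3) simp
  ultimately show ?thesis by (simp add: power_divide)
qed



lemma decay:
  fixes f :: "nat \<Rightarrow> real"
  assumes step: "\<And>k. k \<ge> k0 \<Longrightarrow> f (Suc k) \<le> 2 * f k" and "k \<ge> k0"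
  shows "f k * (1/2)^k \<le> f k0 * (1/2)^k0"
  using assms(2)
proof (induction k rule: nat_induct_at_least)
  case base thus ?case by simp
next
  case (Suc n)
  have "f (Suc n) * (1/2)^(Suc n) = (f (Suc n) / 2) * (1/2)^n" by simp
  also have "\<dots> \<le> f n * (1/2)^n" using step[OF Suc.hyps(1)] by (intro mult_right_mono) auto
  finally show ?case using Suc.IH by linarith
qed

lemma kq_bounds:
  assumes k: "k \<ge> 4"
  shows "(1/2::real)^k \<le> 1/16" "real k * (1/2)^k \<le> 1/4" "(real k - 1) * (1/2)^k \<le> 3/16"
    "(real k - 1) * (real k - 2) * (1/2)^k \<le> 3/8" "real k * real k * (1/2)^k \<le> 1"
    "real k * (real k - 1) * (1/2)^k \<le> 3/4"
proof -
  have k4: "real k \<ge> 4" using k by simp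
  have "(1/2::real)^k \<le> (1/2)^4" using k by (intro power_decreasing) auto
  thus "(1/2::real)^k \<le> 1/16" by (simp add: power_divide)
  have "real k * (1/2)^k \<le> real 4 * (1/2)^4" by (rule decay[OF _ k]) auto
  thus "real k * (1/2)^k \<le> 1/4" by (simp add: power_divide)
  have "(real k - 1) * (1/2)^k \<le> (real 4 - 1) * (1/2)^4" by (rule decay[OF _ k]) auto
  thus "(real k - 1) * (1/2)^k \<le> 3/16" by (simp add: power_divide)
  have "(real k - 1) * (real k - 2) * (1/2)^k \<le> (real 4 - 1) * (real 4 - 2) * (1/2)^4"
  proof (rule decay[OF _ k])
    fix n :: nat assume n: "n \<ge> 4"
    have "0 \<le> (real n - 1) * (real n - 4)" using n by (intro mult_nonneg_nonneg) auto
    thus "(real (Suc n) - 1) * (real (Suc n) - 2) \<le> 2 * ((real n - 1) * (real n - 2))"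
      by (simp add: algebra_simps)
  qed
  thus "(real k - 1) * (real k - 2) * (1/2)^k \<le> 3/8" by (simp add: power_divide)
  have "real k * real k * (1/2)^k \<le> real 4 * real 4 * (1/2)^4"
  proof (rule decay[OF _ k])
    fix n :: nat assume n: "n \<ge> 4"
    have "3*3 \<le> (real n - 1) * (real n - 1)" using n by (intro mult_mono) auto
    hence "0 \<le> (real n - 1) * (real n - 1) - 2" by linarith
    thus "real (Suc n) * real (Suc n) \<le> 2 * (real n * real n)"
      by (simp add: algebra_simps)
  qed
  thus "real k * real k * (1/2)^k \<le> 1" by (simp add: power_divide)
  have "real k * (real k - 1) * (1/2)^k \<le> real 4 * (real 4 - 1) * (1/2)^4"
  proof (rule decay[OF _ k])
    fix n :: nat assume n: "n \<ge> 4"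
    have "0 \<le> (real n) * (real n - 3)" using n by (intro mult_nonneg_nonneg) auto
    thus "real (Suc n) * (real (Suc n) - 1) \<le> 2 * (real n * (real n - 1))"
      by (simp add: algebra_simps)
  qed
  thus "real k * (real k - 1) * (1/2)^k \<le> 3/4" by (simp add: power_divide)
qed



lemma ln_q: "ln ((1/2::real)^k) = - real k * ln 2"
  by (simp add: ln_realpow ln_div)

lemma key_R:
  assumes k: "k \<ge> 4" and x: "1/2 - (1/2)^k \<le> x" "x < 1/2"
  shows "AA x * (real k - 1) * ((1-x)*(1-2*x)) < x * (1 - 2*x^(k-1))"
proof -
  define q :: real where "q = (1/2)^k"
  define e where "e = 1/2 - x"
  have q: "0 < q" "q \<le> 1/16" "(real k - 1) * q \<le> 3/16" "(real k - 1) * (real k - 2) * q \<le> 3/8"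
    using kq_bounds[OF k] by (auto simp: q_def)
  have e: "0 < e" "e \<le> q" using x by (auto simp: e_def q_def)
  have xe: "x = 1/2 - e" by (simp add: e_def)
  have x7: "7/16 \<le> x" using e q xe by linarith
  have l2: "0.688 \<le> ln (2::real)" "ln (2::real) \<le> 0.6934" using ln2_low ln2_up by auto
  define c where "c = (real k - 2) * ln 2"
  have "2 * 0.688 \<le> (real k - 2) * ln (2::real)" using k l2 by (intro mult_mono) auto
  hence c1: "c \<ge> 1" unfolding c_def by simp
  have A: "AA x = ln (1 + 2*e) - ln (4*e)"
  proof -
    have "AA x = ln ((1 + 2*e)/2) - ln (2*e)" unfolding AA_def xe by (simp add: field_simps)
    moreover have "ln (4*e) = ln 2 + ln (2*e)" using ln_mult_pos[of 2 "2*e"] e by simp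
    moreover have "ln ((1+2*e)/2) = ln (1+2*e) - ln 2" using e by (simp add: ln_div)
    ultimately show ?thesis by simp
  qed
  have l4e: "- ln (4*e) = c + ln (q/e)"
  proof -
    have "ln (q/e) = ln q - ln e" using e q by (simp add: ln_div)
    moreover have "ln (4*e) = ln 4 + ln e" using e by (simp add: ln_mult_pos)
    moreover have "ln (4::real) = 2 * ln 2" using ln_realpow[of "2::real" 2] by simp
    moreover have "ln q = - real k * ln 2" unfolding q_def by (rule ln_q)
    ultimately show ?thesis unfolding c_def by (simp add: algebra_simps)
  qed
  have b1: "ln (1 + 2*e) \<le> 2*e" using ln_add_one_self_le_self[of "2*e"] e by simp
  have b2: "ln (q/e) \<le> q/e - 1" using ln_le_minus_one[of "q/e"] e q by simp
  have "e * AA x \<le> e * (2*e + c + (q/e - 1))"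
    using b1 b2 e l4e unfolding A by (intro mult_left_mono) auto
  also have "\<dots> = 2*e*e + e*(c-1) + q" using e by (simp add: field_simps)
  also have "\<dots> \<le> 2*q*q + q*(c-1) + q"
    using e c1 q by (intro add_mono mult_mono) auto
  finally have eA: "e * AA x \<le> 2*q*q + q*c" by (simp add: algebra_simps)
  have Apos: "AA x \<ge> 0"
  proof -
    have "AA x = ln ((1-x)/(1-2*x))" unfolding AA_def using x by (simp add: ln_div)
    moreover have "(1-x)/(1-2*x) \<ge> 1" using x x7 by (simp add: field_simps)
    ultimately show ?thesis by simp
  qed
  have "AA x * (real k - 1) * ((1-x)*(1-2*x)) = (real k - 1) * (1 + 2*e) * (e * AA x)"
    unfolding xe by (simp add: algebra_simps)
  also have "\<dots> \<le> (real k - 1) * (1 + 2*q) * (2*q*q + q*c)"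
    using eA e k Apos by (intro mult_mono) auto
  also have "\<dots> = (1 + 2*q) * (2*q*((real k - 1)*q) + ((real k - 1)*(real k - 2)*q) * ln 2)"
    unfolding c_def by (simp add: algebra_simps)
  also have "\<dots> \<le> (1 + 2*(1/16)) * (2*(1/16)*(3/16) + (3/8) * 0.6934)"
  proof -
    have nn: "0 \<le> (real k - 1)*q" "0 \<le> (real k - 1)*(real k - 2)*q" using k q by auto
    show ?thesis using q l2 nn by (intro mult_mono add_mono) auto
  qed
  also have "\<dots> < (7/16) * (3/4)" by simp
  also have "\<dots> \<le> x * (1 - 2*x^(k-1))"
  proof (intro mult_mono)
    show "7/16 \<le> x" by (rule x7)
    have "x^(k-1) \<le> 2*q" using a_bounds[OF k, of x] x q unfolding q_def by simp
    thus "3/4 \<le> 1 - 2*x^(k-1)" using q by simp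
  qed (use x x7 in auto)
  finally show ?thesis .
qed


lemma AA_deriv: assumes "x < 1/2" shows "DERIV AA x :> 1/((1-x)*(1-2*x))"
proof -
  have "DERIV (\<lambda>x. ln (1 - x) - ln (1 - 2*x)) x :> 1/((1-x)*(1-2*x))"
    using assms apply (auto intro!: derivative_eq_intros)
    apply (simp add: divide_simps)
    done
  thus ?thesis unfolding AA_def[abs_def] .
qed

lemma BB_deriv: assumes k: "k \<ge> 4" and x: "0 < x" "x \<le> 1/2"
  shows "DERIV (BB k) x :> (real k - 1) * x^(k-2) / ((1 - x^(k-1)) * (1 - 2*x^(k-1)))"
proof -
  have a: "0 < x^(k-1)" "x^(k-1) \<le> 1/8" using a_bounds[OF k x] by auto
  have km: "k - 1 - 1 = k - 2" by simp
  have "DERIV (\<lambda>x. ln (1 - x^(k-1)) - ln (1 - 2*x^(k-1))) x :> (real k - 1) * x^(k-2) / ((1 - x^(k-1)) * (1 - 2*x^(k-1)))"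
    using a k apply (auto intro!: derivative_eq_intros simp: km)
    apply (simp add: divide_simps of_nat_diff) apply (simp add: algebra_simps numeral_2_eq_2)
    done
  thus ?thesis unfolding BB_def[abs_def] .
qed

lemma RR_deriv_pos:
  assumes k: "k \<ge> 4" and x: "1/2 - (1/2)^k \<le> x" "x < 1/2"
  shows "\<exists>y. DERIV (RR k) x :> y \<and> y > 0"
proof -
  have q: "(1/2::real)^k \<le> 1/16" using kq_bounds[OF k] by simp
  have x0: "0 < x" "x \<le> 1/2" using x q by auto
  define p where "p = x^(k-2)"
  define a where "a = x^(k-1)"
  have ap: "a = x * p" unfolding a_def p_def using k
    by (metis Suc_diff_Suc less_le_trans numeral_less_iff one_less_numeral_iff power_Suc semiring_norm(76) zero_less_numeral Suc_1 diff_Suc_1 numeral_2_eq_2 le_add_diff_inverse2 nat_le_linear)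
  have a: "0 < a" "a \<le> 1/8" using a_bounds[OF k x0] a_def by auto
  have pp: "p > 0" using x0 p_def by simp
  define A' where "A' = 1/((1-x)*(1-2*x))"
  define B' where "B' = (real k - 1) * p / ((1 - a) * (1 - 2*a))"
  have dA: "DERIV AA x :> A'" using AA_deriv x unfolding A'_def by simp
  have dB: "DERIV (BB k) x :> B'" using BB_deriv[OF k x0] unfolding B'_def p_def a_def by simp
  have Bp: "BB k x > 0" and Bl: "BB k x \<ge> a/(1-a)" using BB_pos[OF k x0] a_def by auto
  have key: "AA x * (real k - 1) * ((1-x)*(1-2*x)) < x * (1 - 2*a)"
    using key_R[OF k x] a_def by simp
  have A'p: "A' > 0" using x0 x unfolding A'_def by (simp add: mult_pos_pos)
  have "A' * BB k x - AA x * B' \<ge> A' * (a/(1-a)) - AA x * B'"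
    using mult_left_mono[OF Bl, of A'] A'p by simp
  moreover have "A' * (a/(1-a)) - AA x * B' > 0"
  proof -
    have nz: "1 - a \<noteq> 0" "1 - 2*a \<noteq> 0" "1-x \<noteq> 0" "1-2*x \<noteq> 0" using a x by auto
    define D where "D = (1-a)*(1-2*a)*(1-x)*(1-2*x)"
    have Dp: "D > 0" unfolding D_def using a x by simp
    have e1: "A' * (a/(1-a)) * D = a*(1-2*a)" unfolding A'_def D_def using nz by (simp add: divide_simps)
    have e2: "AA x * B' * D = (real k - 1)*p*AA x*((1-x)*(1-2*x))" unfolding B'_def D_def using nz by (simp add: divide_simps)
    have "(A' * (a/(1-a)) - AA x * B') * D = A' * (a/(1-a)) * D - AA x * B' * D"
      by (simp add: left_diff_distrib)
    also have "\<dots> = a*(1-2*a) - (real k - 1)*p*AA x*((1-x)*(1-2*x))" by (simp only: e1 e2)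
    also have "\<dots> = p * (x * (1 - 2*a) - AA x * (real k - 1) * ((1-x)*(1-2*x)))"
      using ap by (simp add: algebra_simps)
    finally have "(A' * (a/(1-a)) - AA x * B') * D = p * (x * (1 - 2*a) - AA x * (real k - 1) * ((1-x)*(1-2*x)))" .
    moreover have "p * (x * (1 - 2*a) - AA x * (real k - 1) * ((1-x)*(1-2*x))) > 0" using pp key by simp
    ultimately have XD: "(A' * (a/(1-a)) - AA x * B') * D > 0" by linarith
    have "(A' * (a/(1-a)) - AA x * B') = ((A' * (a/(1-a)) - AA x * B') * D) / D" using Dp by simp
    also have "\<dots> > 0" using XD Dp by (rule divide_pos_pos)
    finally show ?thesis .
  qed
  ultimately have num: "A' * BB k x - AA x * B' > 0" by linarith
  have "DERIV (RR k) x :> (A' * BB k x - AA x * B') / (BB k x * BB k x)"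
    unfolding RR_def[abs_def] using DERIV_divide[OF dA dB] Bp by simp
  thus ?thesis using num Bp by (intro exI[of _ "(A' * BB k x - AA x * B') / (BB k x * BB k x)"]) simp
qed

lemma RR_mono:
  assumes k: "k \<ge> 4" and x: "1/2 - (1/2)^k \<le> x" "x < y" "y < 1/2"
  shows "RR k x < RR k y"
  by (rule DERIV_pos_imp_increasing[OF x(2)]) (use RR_deriv_pos[OF k] x in auto)


lemma fixR:
  assumes k: "k \<ge> 4" and d: "d \<ge> 1" and z: "1/2 - (1/2)^k \<le> z" "z \<le> 1/2"
  shows "Psi k d z = z \<longleftrightarrow> z < 1/2 \<and> RR k z = d - 1"
proof -
  have q: "(1/2::real)^k \<le> 1/16" using kq_bounds[OF k] by simp
  have z0: "0 < z" using z q by linarith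
  have B: "BB k z > 0" using BB_pos[OF k z0 z(2)] by simp
  have "(d-1) * BB k z = AA z \<longleftrightarrow> RR k z = d - 1" unfolding RR_def using B by (auto simp: field_simps)
  thus ?thesis using fix_iff[OF k d z0 z(2)] by simp
qed

lemma RR_cont:
  assumes k: "k \<ge> 4" and M: "M < 1/2"
  shows "continuous_on {1/2 - (1/2)^k .. M} (RR k)"
proof (rule continuous_at_imp_continuous_on, intro ballI)
  fix x assume x: "x \<in> {1/2 - (1/2)^k .. M}"
  then obtain y where "DERIV (RR k) x :> y" using RR_deriv_pos[OF k, of x] M by auto
  thus "isCont (RR k) x" by (rule DERIV_isCont)
qed

lemma xfix_props:
  assumes k: "k \<ge> 4" and dl: "1 \<le> dl" "dl \<le> du"
    and hL: "RR k (1/2 - (1/2)^k) \<le> dl - 1"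
    and M: "1/2 - (1/2)^k \<le> M" "M < 1/2" and hM: "du - 1 \<le> RR k M"
  shows "\<forall>d \<in> {dl..du}. 1/2 - (1/2)^k \<le> xfix k d \<and> xfix k d \<le> M \<and> RR k (xfix k d) = d - 1"
    and "continuous_on {dl..du} (xfix k)"
proof -
  define L :: real where "L = 1/2 - (1/2)^k"
  define S where "S = {L..M}"
  have cont: "continuous_on S (RR k)" unfolding S_def L_def using RR_cont[OF k M(2)] .
  have mono: "\<And>x y. L \<le> x \<Longrightarrow> x < y \<Longrightarrow> y < 1/2 \<Longrightarrow> RR k x < RR k y"
    unfolding L_def using RR_mono[OF k] by blast
  have inj: "inj_on (RR k) S"
  proof (rule inj_onI)
    fix x y assume "x \<in> S" "y \<in> S" "RR k x = RR k y"
    hence xy: "L \<le> x" "x \<le> M" "L \<le> y" "y \<le> M" "RR k x = RR k y" unfolding S_def by auto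
    show "x = y"
    proof (rule ccontr)
      assume "x \<noteq> y"
      hence "x < y \<or> y < x" by auto
      thus False using mono[of x y] mono[of y x] xy M by auto
    qed
  qed
  have main: "\<And>d. d \<in> {dl..du} \<Longrightarrow> xfix k d \<in> S \<and> RR k (xfix k d) = d - 1"
  proof -
    fix d assume d: "d \<in> {dl..du}"
    obtain x where x: "L \<le> x" "x \<le> M" "RR k x = d - 1"
      using IVT'[of "RR k" L "d - 1" M] cont hL hM d M unfolding S_def L_def by auto
    have d1: "d \<ge> 1" using d dl by auto
    have P: "z \<in> {L..1/2} \<and> Psi k d z = z \<longleftrightarrow> L \<le> z \<and> z < 1/2 \<and> RR k z = d - 1" for z
    proof (cases "L \<le> z \<and> z \<le> 1/2")
      case True
      hence "Psi k d z = z \<longleftrightarrow> z < 1/2 \<and> RR k z = d - 1" using fixR[OF k d1, of z] unfolding L_def by blast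
      thus ?thesis using True by auto
    next
      case False thus ?thesis by auto
    qed
    have xf: "xfix k d = (THE x. x \<in> {L..1/2} \<and> Psi k d x = x)"
      unfolding xfix_def L_def by (simp add: power_one_over)
    have "xfix k d = x"
      unfolding xf
    proof (rule the_equality)
      show "x \<in> {L..1/2} \<and> Psi k d x = x" using P[of x] x M by linarith
    next
      fix z assume "z \<in> {L..1/2} \<and> Psi k d z = z"
      hence z: "L \<le> z" "z < 1/2" "RR k z = d - 1" using P[of z] by auto
      show "z = x"
      proof (rule ccontr)
        assume "z \<noteq> x"
        hence "z < x \<or> x < z" by auto
        thus False using mono[of z x] mono[of x z] z x M by auto
      qed
    qed
    thus "xfix k d \<in> S \<and> RR k (xfix k d) = d - 1" using x unfolding S_def by auto
  qed
  thus "\<forall>d \<in> {dl..du}. 1/2 - (1/2)^k \<le> xfix k d \<and> xfix k d \<le> M \<and> RR k (xfix k d) = d - 1"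
    unfolding S_def L_def by auto
  define g where "g = the_inv_into S (RR k)"
  have gc: "continuous_on (RR k ` S) g"
  proof (rule continuous_on_inv[OF cont])
    show "compact S" unfolding S_def by simp
    show "\<forall>x\<in>S. g (RR k x) = x" unfolding g_def using the_inv_into_f_f[OF inj] by blast
  qed
  have sub: "(\<lambda>d. d - 1) ` {dl..du} \<subseteq> RR k ` S"
  proof
    fix y assume "y \<in> (\<lambda>d. d - 1) ` {dl..du}"
    then obtain d where d: "d \<in> {dl..du}" "y = d - 1" by blast
    thus "y \<in> RR k ` S" using main[OF d(1)] by (metis image_eqI)
  qed
  have "continuous_on {dl..du} (\<lambda>d. g (d - 1))"
    by (rule continuous_on_compose2[OF gc _ sub]) (intro continuous_intros)
  moreover have "\<And>d. d \<in> {dl..du} \<Longrightarrow> g (d - 1) = xfix k d"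
    using main unfolding g_def by (metis the_inv_into_f_f[OF inj])
  ultimately show "continuous_on {dl..du} (xfix k)"
    using continuous_on_cong by (metis (no_types, lifting))
qed


lemma Phi_deriv:
  assumes k: "k \<ge> 4" and d: "d \<noteq> 0" and x: "0 < x" "x \<le> 1/2"
  shows "DERIV (Phi k d) x :> 1/(1-x) + d*(real k - 1)*x^(k-1)*(2*x-1)/(x*(1-x^(k-1))*(1-2*x*x^(k-1)))
     - 2*real k*x^(k-1)/(1-2*x*x^(k-1)) + (real k - 1)*x^(k-1)/(x*(1-x^(k-1)))"
proof -
  define p where "p = x^(k-2)"
  define a where "a = x^(k-1)"
  have ap: "a = x * p" unfolding a_def p_def using k
    by (metis Suc_diff_Suc less_le_trans numeral_less_iff one_less_numeral_iff power_Suc semiring_norm(76) zero_less_numeral Suc_1 diff_Suc_1 numeral_2_eq_2 le_add_diff_inverse2 nat_le_linear)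
  have xk: "x^k = x * a" unfolding a_def using k
    by (metis Suc_diff_1 less_le_trans power_Suc zero_less_numeral)
  have a: "0 < a" "a \<le> 1/8" using a_bounds[OF k x] a_def by auto
  have km: "k - 1 - 1 = k - 2" by simp
  have xa: "x * a \<le> 1/16" using a x mult_mono[of x "1/2" a "1/8"] by simp
  have nz: "1 - x \<noteq> 0" "1 - a \<noteq> 0" "1 - 2*(x*a) \<noteq> 0" "x \<noteq> 0" "real k \<noteq> 0" using x a xa k by auto
  have D: "DERIV (Phi k d) x :> 1/(1-x) + d * (1 - 1/real k - 1/d) * (2 * (real k * x^(k-1)))/(1 - 2*x^k)
      - (d-1) * ((real k - 1) * x^(k-2))/(1 - x^(k-1))"
  proof -
    have a1: "x^(k - Suc 0) < 1" "x^(k - Suc 0) * 2 < 1" using a unfolding a_def by auto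
    have xk2: "x^k * 2 < 1" using xa xk by simp
    show ?thesis
    unfolding Phi_def[abs_def] using x a1 xk2
    apply (auto intro!: derivative_eq_intros)
    using k apply (simp add: numeral_2_eq_2 algebra_simps of_nat_diff)
    done
  qed
  have eq: "1/(1-x) + d * (1 - 1/real k - 1/d) * (2 * (real k * x^(k-1)))/(1 - 2*x^k)
      - (d-1) * ((real k - 1) * x^(k-2))/(1 - x^(k-1))
    = 1/(1-x) + d*(real k - 1)*a*(2*x-1)/(x*(1-a)*(1-2*x*a))
     - 2*real k*a/(1-2*x*a) + (real k - 1)*a/(x*(1-a))"
  proof -
    have pa: "x^(k-2) = a/x" using ap nz unfolding p_def by (simp add: field_simps)
    have e: "d * (1 - 1/real k - 1/d) = (d * (real k - 1) - real k)/real k" using nz d by (simp add: field_simps)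
    show ?thesis unfolding xk a_def[symmetric] pa e using nz d
      by (simp add: divide_simps) (simp add: algebra_simps)
  qed
  have eq2: "1/(1-x) + d * (1 - 1/real k - 1/d) * (2 * (real k * x^(k-1)))/(1 - 2*x^k)
      - (d-1) * ((real k - 1) * x^(k-2))/(1 - x^(k-1))
    = 1/(1-x) + d*(real k - 1)*x^(k-1)*(2*x-1)/(x*(1-x^(k-1))*(1-2*x*x^(k-1)))
     - 2*real k*x^(k-1)/(1-2*x*x^(k-1)) + (real k - 1)*x^(k-1)/(x*(1-x^(k-1)))"
    using eq unfolding a_def .
  show ?thesis using D unfolding eq2 .
qed


definition PhiD :: "nat \<Rightarrow> real \<Rightarrow> real \<Rightarrow> real" where
 "PhiD k d x = 1/(1-x) + d*(real k - 1)*x^(k-1)*(2*x-1)/(x*(1-x^(k-1))*(1-2*x*x^(k-1)))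
     - 2*real k*x^(k-1)/(1-2*x*x^(k-1)) + (real k - 1)*x^(k-1)/(x*(1-x^(k-1)))"

lemma PhiD_le2:
  assumes k: "k \<ge> 4" and d: "d \<ge> 0" and x: "1/2 - (1/2)^k \<le> x" "x \<le> 1/2"
  shows "PhiD k d x \<le> 2"
proof -
  define q :: real where "q = (1/2)^k"
  have q: "0 < q" "q \<le> 1/16" "real k * q \<le> 1/4" using kq_bounds[OF k] by (auto simp: q_def)
  have x0: "0 < x" using x q by (simp add: q_def)
  define a where "a = x^(k-1)"
  have a: "0 < a" "a \<le> 2*q" "a \<le> 1/8" using a_bounds[OF k x0 x(2)] by (auto simp: a_def q_def)
  have xa: "x * a \<le> 1/16" using a x mult_mono[of x "1/2" a "1/8"] by simp
  have T1: "1/(1-x) \<le> 2" using x by (simp add: field_simps)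
  have T2: "d*(real k - 1)*a*(2*x-1)/(x*(1-a)*(1-2*x*a)) \<le> 0"
  proof (rule divide_nonpos_pos)
    show "d*(real k - 1)*a*(2*x-1) \<le> 0" using d k a x
      by (intro mult_nonneg_nonpos) auto
    show "0 < x*(1-a)*(1-2*x*a)" using x0 a xa by simp
  qed
  have T34: "(real k - 1)*a/(x*(1-a)) \<le> 2*real k*a/(1-2*x*a)"
  proof -
    have "(real k - 1) * (1 - 2*x*a) \<le> real k - 1" using k x0 a by (simp add: mult_left_le)
    also have "\<dots> \<le> real k * (1 - 4*q)" using q by (simp add: algebra_simps)
    also have "\<dots> \<le> real k * ((1 - 2*q)*(1-2*q))" using q by (intro mult_left_mono) (auto simp: algebra_simps)
    also have "\<dots> \<le> real k * ((2*x)*(1-a))" using q a x unfolding q_def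
      by (intro mult_left_mono mult_mono) auto
    finally have *: "(real k - 1) * (1 - 2*x*a) \<le> 2 * real k * x * (1-a)" by simp
    have nz: "x \<noteq> 0" "1 - a \<noteq> 0" "1 - 2*x*a \<noteq> 0" using x0 a xa by auto
    have "(real k - 1)*a/(x*(1-a)) = ((real k - 1) * (1 - 2*x*a)) * a / (x*(1-a)*(1-2*x*a))"
      using nz by (simp add: divide_simps)
    also have "\<dots> \<le> (2 * real k * x * (1-a)) * a / (x*(1-a)*(1-2*x*a))"
      using * a x0 xa by (intro divide_right_mono mult_right_mono) auto
    also have "\<dots> = 2*real k*a/(1-2*x*a)" using nz by (simp add: divide_simps)
    finally show ?thesis .
  qed
  show ?thesis unfolding PhiD_def a_def[symmetric] using T1 T2 T34 by linarith
qed

lemma PhiD_ge: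
  assumes k: "k \<ge> 4" and d: "d \<ge> 0" and x: "0 < X0" "X0 \<le> x" "x \<le> 1/2" "1/2 - x \<le> E"
    and A0: "x^(k-1) \<le> A0" "A0 \<le> 1/8"
  shows "PhiD k d x \<ge> 1/(1/2+E) - d*(real k - 1)*A0*(2*E)/(X0*(1-A0)*(1-A0)) - 2*real k*A0/(1-A0)"
proof -
  define a where "a = x^(k-1)"
  have x0: "0 < x" using x by simp
  have a: "0 < a" "a \<le> A0" using a_bounds[OF k x0 x(3)] A0 by (auto simp: a_def)
  have xa: "2 * x * a \<le> a" using a x mult_right_mono[of "2*x" 1 a] by simp
  have xa2: "2 * x * a \<le> A0" using xa a by linarith
  have T1: "1/(1/2+E) \<le> 1/(1-x)" using x by (intro divide_left_mono) auto
  have T2: "d*(real k - 1)*A0*(2*E)/(X0*(1-A0)*(1-A0)) \<ge> d*(real k - 1)*a*(1-2*x)/(x*(1-a)*(1-2*x*a))"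
  proof (rule frac_le)
    show "0 \<le> d*(real k - 1)*A0*(2*E)" using d k a x by simp
    show "d*(real k - 1)*a*(1-2*x) \<le> d*(real k - 1)*A0*(2*E)" using d k a x
      by (intro mult_mono mult_left_mono) auto
    show "0 < X0*(1-A0)*(1-A0)" using x A0 by simp
    show "X0*(1-A0)*(1-A0) \<le> x*(1-a)*(1-2*x*a)" using x a A0 xa2 by (intro mult_mono) auto
  qed
  have T2': "d*(real k - 1)*a*(2*x-1)/(x*(1-a)*(1-2*x*a)) = - (d*(real k - 1)*a*(1-2*x)/(x*(1-a)*(1-2*x*a)))"
  proof -
    have e: "d*(real k - 1)*a*(2*x-1) = - (d*(real k - 1)*a*(1-2*x))" by (simp add: algebra_simps)
    show ?thesis by (subst e) (simp only: minus_divide_left)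
  qed
  have T3: "2*real k*a/(1-2*x*a) \<le> 2*real k*A0/(1-A0)"
    using a A0 xa2 k by (intro frac_le) auto
  have T4: "(real k - 1)*a/(x*(1-a)) \<ge> 0" using k a x0 A0 by simp
  show ?thesis unfolding PhiD_def a_def[symmetric] T2' using T1 T2 T3 T4 by linarith
qed


lemma Phi_half:
  assumes k: "k \<ge> 4" and d: "d \<noteq> 0"
  shows "Phi k d (1/2) = ln 2 + d / real k * ln (1 - 2*(1/2)^k)"
proof -
  have p1: "(1/2::real)^(k-1) = 2*(1/2)^k"
  proof -
    obtain m where m: "k = Suc m" using k by (cases k) auto
    show ?thesis unfolding m by simp
  qed
  have l: "- ln (1 - 1/2::real) = ln 2" by (simp add: ln_div)
  have kk: "real k \<noteq> 0" using k by simp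
  have "Phi k d (1/2) = ln 2 + ln (1 - 2*(1/2)^k) * (- d * (1 - 1/real k - 1/d) + (d - 1))"
    unfolding Phi_def p1 l by (simp add: algebra_simps)
  also have "- d * (1 - 1/real k - 1/d) + (d - 1) = d / real k" using d kk by (simp add: field_simps)
  finally show ?thesis by simp
qed

lemma Phi_lower:
  assumes k: "k \<ge> 4" and d: "d \<ge> 1" and x: "1/2 - (1/2)^k \<le> x0" "x0 \<le> 1/2"
  shows "Phi k d x0 \<ge> Phi k d (1/2) - 2*(1/2 - x0)"
proof -
  have q: "(1/2::real)^k \<le> 1/16" using kq_bounds[OF k] by simp
  let ?f = "\<lambda>x. Phi k d x - 2*x"
  have "?f (1/2) \<le> ?f x0"
  proof (rule DERIV_nonpos_imp_nonincreasing[OF x(2)])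
    fix x assume xx: "x0 \<le> x" "x \<le> 1/2"
    have x0: "0 < x" using xx x q by linarith
    have "DERIV ?f x :> PhiD k d x - 2"
      using Phi_deriv[OF k _ x0 xx(2), of d] d unfolding PhiD_def
      by (auto intro!: derivative_eq_intros)
    moreover have "PhiD k d x \<le> 2" using PhiD_le2[OF k _ _ xx(2), of d] d xx x by auto
    ultimately show "\<exists>y. DERIV ?f x :> y \<and> y \<le> 0" by fastforce
  qed
  thus ?thesis by simp
qed

lemma Phi_upper:
  assumes k: "k \<ge> 4" and d: "d \<ge> 1" and x: "0 < x0" "x0 \<le> 1/2"
    and D: "\<And>x. x0 \<le> x \<Longrightarrow> x \<le> 1/2 \<Longrightarrow> PhiD k d x \<ge> 0"
  shows "Phi k d x0 \<le> Phi k d (1/2)"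
proof (rule DERIV_nonneg_imp_nondecreasing[OF x(2)])
  fix x assume xx: "x0 \<le> x" "x \<le> 1/2"
  have x0: "0 < x" using xx x by linarith
  have "DERIV (Phi k d) x :> PhiD k d x"
    using Phi_deriv[OF k _ x0 xx(2), of d] d unfolding PhiD_def by auto
  thus "\<exists>y. DERIV (Phi k d) x :> y \<and> y \<ge> 0" using D[OF xx] by blast
qed


lemma BB_alt: assumes k: "k \<ge> 4" and x: "0 < x" "x \<le> 1/2"
  shows "BB k x = ln (1 + x^(k-1)/(1 - 2*x^(k-1)))"
proof -
  have a: "0 < x^(k-1)" "x^(k-1) \<le> 1/8" using a_bounds[OF k x] by auto
  have "1 + x^(k-1)/(1 - 2*x^(k-1)) = (1 - x^(k-1))/(1 - 2*x^(k-1))" using a by (simp add: field_simps)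
  thus ?thesis unfolding BB_def using a by (simp add: ln_div)
qed

lemma AA_alt: assumes "x < 1/2" shows "AA x = ln ((1-x)/(1-2*x))"
  unfolding AA_def using assms by (simp add: ln_div)

lemma BB_upper: assumes k: "k \<ge> 4" and x: "0 < x" "x \<le> 1/2"
  shows "BB k x \<le> x^(k-1)/(1 - 2*x^(k-1))"
proof -
  have a: "0 < x^(k-1)" "x^(k-1) \<le> 1/8" using a_bounds[OF k x] by auto
  show ?thesis unfolding BB_alt[OF k x] by (rule ln_add_one_self_le_self) (use a in simp)
qed

lemma pow2: assumes "k \<ge> 1" shows "(2::real)^(k-1) = 1/(2*(1/2)^k)"
proof -
  obtain m where m: "k = Suc m" using assms by (cases k) auto
  show ?thesis unfolding m by (simp add: power_one_over)
qed

lemma RR_ge_iff: assumes k: "k \<ge> 4" and x: "0 < x" "x \<le> 1/2"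
  shows "c \<le> RR k x \<longleftrightarrow> c * BB k x \<le> AA x"
  using BB_pos[OF k x] unfolding RR_def by (simp add: pos_le_divide_eq)

lemma RR_le_iff: assumes k: "k \<ge> 4" and x: "0 < x" "x \<le> 1/2"
  shows "RR k x \<le> c \<longleftrightarrow> AA x \<le> c * BB k x"
  using BB_pos[OF k x] unfolding RR_def by (simp add: pos_divide_le_eq)

lemma C3:
  assumes k: "k \<ge> 4"
  shows "d_ubd k - 1 \<le> RR k (1/2 - (1/2)^k/64)"
proof -
  define q :: real where "q = (1/2)^k"
  have q: "0 < q" "q \<le> 1/16" "real k * q \<le> 1/4" using kq_bounds[OF k] by (auto simp: q_def)
  define M where "M = 1/2 - q/64"
  have M: "0 < M" "M \<le> 1/2" "M < 1/2" using q by (auto simp: M_def)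
  have l2: "0.688 \<le> ln (2::real)" "ln (2::real) \<le> 0.6934" using ln2_low ln2_up by auto
  have p2: "(2::real)^(k-1) = 1/(2*q)" using pow2[of k] k unfolding q_def by simp
  have du: "d_ubd k = real k * ln 2 / (2*q)" unfolding d_ubd_def p2 by simp
  have du0: "d_ubd k \<ge> 1"
  proof -
    have "real k * ln 2 / (2*q) \<ge> 4 * 0.688 / (2*(1/16))" using k l2 q
      by (intro frac_le mult_mono) auto
    thus ?thesis using du by simp
  qed
  have A: "AA M \<ge> (real k + 4) * ln 2"
  proof -
    have "AA M = ln ((1-M)/(1-2*M))" using AA_alt M by simp
    also have "(1-M)/(1-2*M) = (1/2 + q/64)/(q/32)" unfolding M_def by (simp add: field_simps)
    also have "\<dots> \<ge> 16/q" using q by (simp add: field_simps)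
    hence "ln ((1/2 + q/64)/(q/32)) \<ge> ln (16/q)" using q by simp
    also have "ln (16/q) = (real k + 4) * ln 2"
    proof -
      have "ln (16/q) = ln 16 - ln q" using q by (simp add: ln_div)
      moreover have "ln (16::real) = 4 * ln 2" using ln_realpow[of "2::real" 4] by simp
      moreover have "ln q = - real k * ln 2" unfolding q_def by (simp add: ln_realpow ln_div)
      ultimately show ?thesis by (simp add: algebra_simps)
    qed
    finally show ?thesis by linarith
  qed
  have B: "BB k M \<le> 2*q/(1-4*q)"
  proof -
    have a: "0 < M^(k-1)" "M^(k-1) \<le> 2*q" using a_bounds[OF k M(1,2)] by (auto simp: q_def)
    have "BB k M \<le> M^(k-1)/(1 - 2*M^(k-1))" by (rule BB_upper[OF k M(1,2)])
    also have "\<dots> \<le> 2*q/(1-4*q)" using a q by (intro frac_le) auto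
    finally show ?thesis .
  qed
  have B0: "BB k M > 0" using BB_pos[OF k M(1,2)] by simp
  have "(d_ubd k - 1) * BB k M \<le> d_ubd k * BB k M" using B0 by simp
  also have "\<dots> \<le> d_ubd k * (2*q/(1-4*q))" using B du0 by (intro mult_left_mono) auto
  also have "\<dots> = real k * ln 2 / (1 - 4*q)" unfolding du using q by (simp add: field_simps)
  also have "\<dots> \<le> (real k + 4) * ln 2"
  proof -
    have "real k \<le> (real k + 4) * (1 - 4*q)" using q by (simp add: algebra_simps)
    hence "real k * ln 2 \<le> (real k + 4) * ln 2 * (1 - 4*q)" using l2 by (simp add: mult_right_mono mult.commute mult.left_commute)
    thus ?thesis using q by (simp add: divide_le_eq)
  qed
  also have "\<dots> \<le> AA M" by (rule A)
  finally show ?thesis using RR_ge_iff[OF k M(1,2)] unfolding M_def q_def by simp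
qed


lemma kq5:
  assumes k: "k \<ge> 5"
  shows "(1/2::real)^k \<le> 1/32" "real k * (1/2)^k \<le> 5/32" "real k * (real k - 1) * (1/2)^k \<le> 5/8"
proof -
  have "(1/2::real)^k \<le> (1/2)^5" using k by (intro power_decreasing) auto
  thus "(1/2::real)^k \<le> 1/32" by (simp add: power_divide)
  have "real k * (1/2)^k \<le> real 5 * (1/2)^5" by (rule decay[OF _ k]) auto
  thus "real k * (1/2)^k \<le> 5/32" by (simp add: power_divide)
  have "real k * (real k - 1) * (1/2)^k \<le> real 5 * (real 5 - 1) * (1/2)^5"
  proof (rule decay[OF _ k])
    fix n :: nat assume n: "n \<ge> 5"
    have "0 \<le> (real n) * (real n - 3)" using n by (intro mult_nonneg_nonneg) auto
    thus "real (Suc n) * (real (Suc n) - 1) \<le> 2 * (real n * (real n - 1))"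
      by (simp add: algebra_simps)
  qed
  thus "real k * (real k - 1) * (1/2)^k \<le> 5/8" by (simp add: power_divide)
qed

lemma kq6:
  assumes k: "k \<ge> 6"
  shows "(1/2::real)^k \<le> 1/64" "real k * (real k + 1) * (1/2)^k \<le> 21/32"
proof -
  have "(1/2::real)^k \<le> (1/2)^6" using k by (intro power_decreasing) auto
  thus "(1/2::real)^k \<le> 1/64" by (simp add: power_divide)
  have "real k * (real k + 1) * (1/2)^k \<le> real 6 * (real 6 + 1) * (1/2)^6"
  proof (rule decay[OF _ k])
    fix n :: nat assume n: "n \<ge> 6"
    have "0 \<le> (real n + 1) * (real n - 2)" using n by (intro mult_nonneg_nonneg) auto
    thus "real (Suc n) * (real (Suc n) + 1) \<le> 2 * (real n * (real n + 1))"
      by (simp add: algebra_simps)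
  qed
  thus "real k * (real k + 1) * (1/2)^k \<le> 21/32" by (simp add: power_divide)
qed

lemma pow_half_shift: assumes "k \<ge> 1" shows "(y/2::real)^(k-1) = 2*(1/2)^k * y^(k-1)"
proof -
  obtain m where m: "k = Suc m" using assms by (cases k) auto
  show ?thesis unfolding m by (simp add: power_divide power_one_over)
qed

lemma C2_gen:
  assumes k: "k \<ge> 6"
  shows "RR k (1/2 - (1/2)^k) \<le> d_lbd k - 1"
proof -
  define q :: real where "q = (1/2)^k"
  have q: "0 < q" "q \<le> 1/64" "real k * (real k + 1) * q \<le> 21/32" "(real k - 1) * q \<le> 3/16"
    using kq6[OF k] kq_bounds[of k] k by (auto simp: q_def)
  have l2: "0.688 \<le> ln (2::real)" "ln (2::real) \<le> 0.6934" using ln2_low ln2_up by auto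
  define L where "L = 1/2 - q"
  have L: "0 < L" "L \<le> 1/2" "L < 1/2" using q by (auto simp: L_def)
  have k4: "k \<ge> 4" using k by simp
  have p2: "(2::real)^(k-1) = 1/(2*q)" using pow2[of k] k unfolding q_def by simp
  have dl: "d_lbd k = real k * ln 2 * (1 - 4*q) / (2*q)" unfolding d_lbd_def p2 using k q
    by (simp add: field_simps)
  have A: "AA L \<le> 2*q + (real k - 2) * ln 2"
  proof -
    have "AA L = ln ((1-L)/(1-2*L))" using AA_alt L by simp
    also have "(1-L)/(1-2*L) = (1 + 2*q) * (1/(4*q))" unfolding L_def using q by (simp add: field_simps)
    also have "ln \<dots> = ln (1 + 2*q) + ln (1/(4*q))" using q by (intro ln_mult_pos) auto
    also have "ln (1/(4*q)) = (real k - 2) * ln 2"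
    proof -
      have "ln (1/(4*q)) = - ln 4 - ln q" using q by (simp add: ln_div ln_mult_pos)
      moreover have "ln (4::real) = 2 * ln 2" using ln_realpow[of "2::real" 2] by simp
      moreover have "ln q = - real k * ln 2" unfolding q_def by (simp add: ln_realpow ln_div)
      ultimately show ?thesis by (simp add: algebra_simps)
    qed
    finally show ?thesis using ln_add_one_self_le_self[of "2*q"] q by linarith
  qed
  define s where "s = (1 - 2*q)^(k-1)"
  have s0: "s \<ge> 1 - 2*(real k - 1)*q"
    using Bernoulli_inequality[of "-2*q" "k-1"] q k unfolding s_def by (simp add: of_nat_diff algebra_simps)
  have s1: "s \<le> 1" unfolding s_def using q by (intro power_le_one) auto
  have a: "L ^ (k-1) = 2*q* s" unfolding L_def s_def q_def using pow_half_shift[of k "1 - 2*(1/2)^k"] k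
    by (simp add: field_simps)
  have B: "BB k L \<ge> 2*q* s"
  proof -
    have aa: "0 < L ^ (k-1)" "L ^ (k-1) \<le> 1/8" using a_bounds[OF k4 L(1,2)] by auto
    have "BB k L \<ge> L ^ (k-1)/(1 - L ^ (k-1))" using BB_pos[OF k4 L(1,2)] by simp
    moreover have "L ^ (k-1)/(1 - L ^ (k-1)) \<ge> L ^ (k-1)" using aa by (simp add: field_simps)
    ultimately show ?thesis using a by simp
  qed
  define K1 where "K1 = real k * ln 2 * (1 - 4*q) - 2*q"
  have K1: "K1 \<ge> 0"
  proof -
    have "real k * ln 2 * (1 - 4*q) \<ge> 1 * 0.5 * (1/2)" using k l2 q by (intro mult_mono) auto
    thus ?thesis unfolding K1_def using q by linarith
  qed
  have dl1: "(d_lbd k - 1) * (2*q) = K1" unfolding dl K1_def using q by (simp add: field_simps)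
  have "d_lbd k - 1 = K1/(2*q)" using dl1 q by (simp add: field_simps)
  hence dl0: "d_lbd k - 1 \<ge> 0" using K1 q by simp
  have "(d_lbd k - 1) * BB k L \<ge> (d_lbd k - 1) * (2*q* s)" using B dl0 by (intro mult_left_mono) auto
  also have "(d_lbd k - 1) * (2*q* s) = K1 * s" using dl1 by (metis mult.assoc)
  also have "K1 * s \<ge> K1 * (1 - 2*(real k - 1)*q)" using K1 s0 by (intro mult_left_mono)
  also have "K1 * (1 - 2*(real k - 1)*q) = real k * ln 2 * ((1 - 4*q) * (1 - 2*(real k - 1)*q)) - 2*q*(1 - 2*(real k - 1)*q)"
    unfolding K1_def by (simp add: algebra_simps)
  also have "\<dots> \<ge> real k * ln 2 * (1 - 2*(real k + 1)*q) - 2*q"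
  proof -
    have "(1 - 4*q) * (1 - 2*(real k - 1)*q) \<ge> 1 - 2*(real k + 1)*q"
    proof -
      have "0 \<le> 8 * q * ((real k - 1) * q)" using q k by simp
      thus ?thesis by (simp add: algebra_simps)
    qed
    hence "real k * ln 2 * ((1 - 4*q) * (1 - 2*(real k - 1)*q)) \<ge> real k * ln 2 * (1 - 2*(real k + 1)*q)"
      using l2 by (intro mult_left_mono) auto
    moreover have "2*q*(1 - 2*(real k - 1)*q) \<le> 2*q" using q k by (simp add: mult_left_le)
    ultimately show ?thesis by linarith
  qed
  also have "real k * ln 2 * (1 - 2*(real k + 1)*q) - 2*q = real k * ln 2 - 2 * ln 2 * (real k * (real k + 1) * q) - 2*q"
    by (simp add: algebra_simps)
  finally have X: "(d_lbd k - 1) * BB k L \<ge> real k * ln 2 - 2 * ln 2 * (real k * (real k + 1) * q) - 2*q" .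
  have "ln 2 * (real k * (real k + 1) * q) \<le> ln 2 * (21/32)" using q l2 by (intro mult_left_mono) auto
  hence "AA L \<le> (d_lbd k - 1) * BB k L" using X A q l2 by (simp add: algebra_simps)
  thus ?thesis using RR_le_iff[OF k4 L(1,2)] unfolding L_def q_def by simp
qed


lemma C5_gen:
  assumes k: "k \<ge> 5"
  shows "RR k (1/2 - (1/2)^k/2) \<le> d_ubd k - 1"
proof -
  define q :: real where "q = (1/2)^k"
  have q: "0 < q" "q \<le> 1/32" "real k * (real k - 1) * q \<le> 5/8" "(real k - 1) * q \<le> 3/16"
    using kq5[OF k] kq_bounds[of k] k by (auto simp: q_def)
  have l2: "0.688 \<le> ln (2::real)" "ln (2::real) \<le> 0.6934" using ln2_low ln2_up by auto
  define L where "L = 1/2 - q/2"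
  have L: "0 < L" "L \<le> 1/2" "L < 1/2" using q by (auto simp: L_def)
  have k4: "k \<ge> 4" using k by simp
  have p2: "(2::real)^(k-1) = 1/(2*q)" using pow2[of k] k unfolding q_def by simp
  have du: "d_ubd k = real k * ln 2 / (2*q)" unfolding d_ubd_def p2 by simp
  have A: "AA L \<le> q + (real k - 1) * ln 2"
  proof -
    have "AA L = ln ((1-L)/(1-2*L))" using AA_alt L by simp
    also have "(1-L)/(1-2*L) = (1 + q) * (1/(2*q))" unfolding L_def using q by (simp add: field_simps)
    also have "ln \<dots> = ln (1 + q) + ln (1/(2*q))" using q by (intro ln_mult_pos) auto
    also have "ln (1/(2*q)) = (real k - 1) * ln 2"
    proof -
      have "ln (1/(2*q)) = - ln 2 - ln q" using q by (simp add: ln_div ln_mult_pos)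
      moreover have "ln q = - real k * ln 2" unfolding q_def by (simp add: ln_realpow ln_div)
      ultimately show ?thesis by (simp add: algebra_simps)
    qed
    finally show ?thesis using ln_add_one_self_le_self[of "q"] q by linarith
  qed
  define s where "s = (1 - q)^(k-1)"
  have s0: "s \<ge> 1 - (real k - 1)*q"
    using Bernoulli_inequality[of "-q" "k-1"] q k unfolding s_def by (simp add: of_nat_diff algebra_simps)
  have a: "L ^ (k-1) = 2*q* s" unfolding L_def s_def q_def using pow_half_shift[of k "1 - (1/2)^k"] k
    by (simp add: field_simps)
  have B: "BB k L \<ge> 2*q* s"
  proof -
    have aa: "0 < L ^ (k-1)" "L ^ (k-1) \<le> 1/8" using a_bounds[OF k4 L(1,2)] by auto
    have "BB k L \<ge> L ^ (k-1)/(1 - L ^ (k-1))" using BB_pos[OF k4 L(1,2)] by simp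
    moreover have "L ^ (k-1)/(1 - L ^ (k-1)) \<ge> L ^ (k-1)" using aa by (simp add: field_simps)
    ultimately show ?thesis using a by simp
  qed
  define K1 where "K1 = real k * ln 2 - 2*q"
  have K1: "K1 \<ge> 0"
  proof -
    have "real k * ln 2 \<ge> 1 * 0.5" using k l2 by (intro mult_mono) auto
    thus ?thesis unfolding K1_def using q by linarith
  qed
  have dl1: "(d_ubd k - 1) * (2*q) = K1" unfolding du K1_def using q by (simp add: field_simps)
  have "d_ubd k - 1 = K1/(2*q)" using dl1 q by (simp add: field_simps)
  hence dl0: "d_ubd k - 1 \<ge> 0" using K1 q by simp
  have "(d_ubd k - 1) * BB k L \<ge> (d_ubd k - 1) * (2*q* s)" using B dl0 by (intro mult_left_mono) auto
  also have "(d_ubd k - 1) * (2*q* s) = K1 * s" using dl1 by (metis mult.assoc)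
  also have "K1 * s \<ge> K1 * (1 - (real k - 1)*q)" using K1 s0 by (intro mult_left_mono)
  also have "K1 * (1 - (real k - 1)*q) = real k * ln 2 - ln 2 * (real k * (real k - 1) * q) - 2*q*(1 - (real k - 1)*q)"
    unfolding K1_def by (simp add: algebra_simps)
  also have "\<dots> \<ge> real k * ln 2 - ln 2 * (real k * (real k - 1) * q) - 2*q"
  proof -
    have "2*q*(1 - (real k - 1)*q) \<le> 2*q" using q k by (simp add: mult_left_le)
    thus ?thesis by linarith
  qed
  finally have X: "(d_ubd k - 1) * BB k L \<ge> real k * ln 2 - ln 2 * (real k * (real k - 1) * q) - 2*q" .
  have "ln 2 * (real k * (real k - 1) * q) \<le> ln 2 * (5/8)" using q l2 by (intro mult_left_mono) auto
  hence "AA L \<le> (d_ubd k - 1) * BB k L" using X A q l2 by (simp add: algebra_simps)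
  thus ?thesis using RR_le_iff[OF k4 L(1,2)] unfolding L_def q_def by simp
qed

lemma C5D_gen:
  assumes k: "k \<ge> 5" and x: "1/2 - (1/2)^k/2 \<le> x" "x \<le> 1/2"
  shows "PhiD k (d_ubd k) x \<ge> 0"
proof -
  define q :: real where "q = (1/2)^k"
  have q: "0 < q" "q \<le> 1/32" "real k * (real k - 1) * q \<le> 5/8" "real k * q \<le> 5/32"
    using kq5[OF k] by (auto simp: q_def)
  have l2: "0.688 \<le> ln (2::real)" "ln (2::real) \<le> 0.6934" using ln2_low ln2_up by auto
  have k4: "k \<ge> 4" using k by simp
  have p2: "(2::real)^(k-1) = 1/(2*q)" using pow2[of k] k unfolding q_def by simp
  have du: "d_ubd k = real k * ln 2 / (2*q)" unfolding d_ubd_def p2 by simp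
  have du0: "d_ubd k \<ge> 0" unfolding du using q by simp
  have X0: "0 < 1/2 - q/2" using q by simp
  have x0: "0 < x" using x q by (simp add: q_def)
  have A0: "x^(k-1) \<le> 2*q" "2*q \<le> 1/8" using a_bounds[OF k4 x0 x(2)] q by (auto simp: q_def)
  have "PhiD k (d_ubd k) x \<ge> 1/(1/2+q/2) - d_ubd k*(real k - 1)*(2*q)*(2*(q/2))/((1/2 - q/2)*(1-2*q)*(1-2*q)) - 2*real k*(2*q)/(1-2*q)"
    by (rule PhiD_ge[OF k4 du0 X0]) (use x A0 in \<open>auto simp: q_def\<close>)
  also have "d_ubd k*(real k - 1)*(2*q)*(2*(q/2)) = ln 2 * (real k * (real k - 1) * q)"
    unfolding du using q by (simp add: field_simps)
  also have "2*real k*(2*q) = 4 * (real k * q)" by simp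
  finally have P: "PhiD k (d_ubd k) x \<ge> 1/(1/2+q/2) - ln 2 * (real k * (real k - 1) * q)/((1/2 - q/2)*(1-2*q)*(1-2*q)) - 4 * (real k * q)/(1-2*q)" .
  have t1: "1/(1/2+q/2) \<ge> 1/(1/2 + 1/64)" using q by (intro divide_left_mono) auto
  have t2: "ln 2 * (real k * (real k - 1) * q)/((1/2 - q/2)*(1-2*q)*(1-2*q)) \<le> (0.6934 * (5/8))/((31/64)*(15/16)*(15/16))"
  proof (rule frac_le)
    show "0 \<le> 0.6934 * (5/8::real)" by simp
    have "0 \<le> real k * (real k - 1) * q" using k q by simp
    thus "ln 2 * (real k * (real k - 1) * q) \<le> 0.6934 * (5/8)" using q l2 by (intro mult_mono) auto
    show "0 < (31/64::real)*(15/16)*(15/16)" by simp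
    show "(31/64)*(15/16)*(15/16) \<le> (1/2 - q/2)*(1-2*q)*(1-2*q)" using q by (intro mult_mono) auto
  qed
  have t3: "4 * (real k * q)/(1-2*q) \<le> 4*(5/32)/(15/16)"
  proof (rule frac_le)
    show "0 \<le> 4*(5/32::real)" by simp
    show "4 * (real k * q) \<le> 4*(5/32)" using q by simp
  qed (use q in auto)
  show ?thesis using P t1 t2 t3 by simp
qed

lemma C4_gen:
  assumes k: "k \<ge> 5"
  shows "Phi k (d_lbd k) (1/2) > 2*(1/2)^k"
proof -
  define q :: real where "q = (1/2)^k"
  have q: "0 < q" "q \<le> 1/32" using kq5[OF k] by (auto simp: q_def)
  have l2: "0.688 \<le> ln (2::real)" "ln (2::real) \<le> 0.6934" using ln2_low ln2_up by auto
  have k4: "k \<ge> 4" using k by simp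
  have p2: "(2::real)^(k-1) = 1/(2*q)" using pow2[of k] k unfolding q_def by simp
  have dl: "d_lbd k = real k * ln 2 * (1 - 4*q) / (2*q)" unfolding d_lbd_def p2 using k q
    by (simp add: field_simps)
  have dl0: "d_lbd k \<noteq> 0" unfolding dl using q k l2 by simp
  have kk: "real k > 0" using k by simp
  have H0: "Phi k (d_lbd k) (1/2) = ln 2 + d_lbd k / real k * ln (1 - 2*q)"
    using Phi_half[OF k4 dl0] by (simp add: q_def)
  have H1: "d_lbd k / real k = ln 2 * (1 - 4*q) / (2*q)" unfolding dl using kk by simp
  have H: "Phi k (d_lbd k) (1/2) = ln 2 - ln 2 * (1 - 4*q) / (2*q) * (- ln (1 - 2*q))"
    unfolding H0 H1 by simp
  have m: "- ln (1 - 2*q) \<le> 2*q + (2*q)^2/(2*(1-2*q))" by (rule mln_up) (use q in auto)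
  have "ln 2 * (1 - 4*q) / (2*q) * (- ln (1 - 2*q)) \<le> ln 2 * (1 - 4*q) / (2*q) * (2*q + (2*q)^2/(2*(1-2*q)))"
    using m q l2 by (intro mult_left_mono) auto
  also have "\<dots> = ln 2 * ((1 - 4*q) * (1 - q) / (1 - 2*q))" using q by (simp add: field_simps power2_eq_square)
  finally have G1: "Phi k (d_lbd k) (1/2) \<ge> ln 2 * (1 - (1 - 4*q) * (1 - q) / (1 - 2*q))" unfolding H
    by (simp add: algebra_simps)
  have G2: "1 - (1 - 4*q) * (1 - q) / (1 - 2*q) = q * (3 - 4*q) / (1 - 2*q)" using q by (simp add: field_simps)
  have G3: "ln 2 * (q * (3 - 4*q) / (1 - 2*q)) > 2*q"
  proof -
    have le: "ln 2 * (3 - 4*q) \<ge> (86/125) * (3 - 4*q)" using l2 q by (intro mult_right_mono) auto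
    have "(86/125) * (3 - 4*q) > 2 * (1 - 2*q)" using q by (simp add: algebra_simps)
    hence "ln 2 * (3 - 4*q) > 2 * (1 - 2*q)" using le by (rule less_le_trans)
    hence "q * (ln 2 * (3 - 4*q)) > q * (2 * (1 - 2*q))" using q by simp
    hence "ln 2 * (q * (3 - 4*q)) > 2*q * (1 - 2*q)" by (simp add: algebra_simps)
    thus ?thesis using q by (simp add: field_simps)
  qed
  show ?thesis using G1 G2 G3 unfolding q_def by simp
qed

lemma C_ubd:
  assumes k: "k \<ge> 4"
  shows "Phi k (d_ubd k) (1/2) < 0"
proof -
  define q :: real where "q = (1/2)^k"
  have q: "0 < q" "q \<le> 1/16" using kq_bounds[OF k] by (auto simp: q_def)
  have p2: "(2::real)^(k-1) = 1/(2*q)" using pow2[of k] k unfolding q_def by simp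
  have du: "d_ubd k = real k * ln 2 / (2*q)" unfolding d_ubd_def p2 by simp
  have du0: "d_ubd k \<noteq> 0" unfolding du using q k by simp
  have kk: "real k > 0" using k by simp
  have H0: "Phi k (d_ubd k) (1/2) = ln 2 + d_ubd k / real k * ln (1 - 2*q)"
    using Phi_half[OF k du0] by (simp add: q_def)
  have H1: "d_ubd k / real k = ln 2 / (2*q)" unfolding du using kk by simp
  have H: "Phi k (d_ubd k) (1/2) = ln 2 + ln 2 / (2*q) * ln (1 - 2*q)"
    unfolding H0 H1 by simp
  have "ln (1 - 2*q) \<le> (1 - 2*q) - 1" using q by (intro ln_le_minus_one) auto
  moreover have "ln (1 - 2*q) \<noteq> (1 - 2*q) - 1"
  proof
    assume "ln (1 - 2*q) = (1 - 2*q) - 1"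
    hence "1 - 2*q = 1" using q by (intro ln_eq_minus_one) auto
    thus False using q by simp
  qed
  ultimately have "ln (1 - 2*q) < - 2*q" by simp
  hence "ln 2 / (2*q) * ln (1 - 2*q) < ln 2 / (2*q) * (-2*q)" using q by (intro mult_strict_left_mono) auto
  also have "ln 2 / (2*q) * (-2*q) = - ln 2" using q by simp
  finally show ?thesis unfolding H by simp
qed


lemma C2_4: "RR 4 (1/2 - (1/2)^4) \<le> d_lbd 4 - 1"
proof -
  have l2: "0.688 \<le> ln (2::real)" "ln (2::real) \<le> 0.6934" using ln2_low ln2_up by auto
  have L: "(1/2 - (1/2)^4::real) = 7/16" by (simp add: power_divide)
  have dl: "d_lbd 4 = 16.7" by (simp add: d_lbd_def)
  have A: "AA (7/16) = 2 * ln 2 + ln (1 + 1/8)"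
  proof -
    have "AA (7/16) = ln ((1 - 7/16)/(1 - 2*(7/16)))" by (rule AA_alt) simp
    also have "(1 - 7/16)/(1 - 2*(7/16)) = (4::real) * (1 + 1/8)" by simp
    also have "ln ((4::real) * (1 + 1/8)) = ln 4 + ln (1 + 1/8)" by (rule ln_mult_pos) auto
    also have "ln (4::real) = 2 * ln 2" using ln_realpow[of "2::real" 2] by simp
    finally show ?thesis .
  qed
  have A1: "ln (1 + 1/8::real) \<le> 1/8 - (1/8)^2/2 + (1/8)^3/3" by (rule ln_up3) simp
  have B: "BB 4 (7/16) = ln (1 + 343/3410)"
    using BB_alt[of 4 "7/16"] by (simp add: power_divide)
  have B1: "343/3410 - (343/3410)^2/2 + (343/3410)^3/3 - (343/3410)^4/4 \<le> ln (1 + 343/3410::real)"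
    by (rule ln_low4) simp
  have "AA (7/16) \<le> (d_lbd 4 - 1) * BB 4 (7/16)"
    unfolding A B dl using A1 B1 l2 by (simp add: power_divide)
  thus ?thesis unfolding L using RR_le_iff[of 4 "7/16"] by simp
qed

lemma C2_5: "RR 5 (1/2 - (1/2)^5) \<le> d_lbd 5 - 1"
proof -
  have l2: "0.688 \<le> ln (2::real)" "ln (2::real) \<le> 0.6934" using ln2_low ln2_up by auto
  have L: "(1/2 - (1/2)^5::real) = 15/32" by (simp add: power_divide)
  have dl: "d_lbd 5 = 70 * ln 2" by (simp add: d_lbd_def)
  have A: "AA (15/32) = 3 * ln 2 + ln (1 + 1/16)"
  proof -
    have "AA (15/32) = ln ((1 - 15/32)/(1 - 2*(15/32)))" by (rule AA_alt) simp
    also have "(1 - 15/32)/(1 - 2*(15/32)) = (8::real) * (1 + 1/16)" by simp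
    also have "ln ((8::real) * (1 + 1/16)) = ln 8 + ln (1 + 1/16)" by (rule ln_mult_pos) auto
    also have "ln (8::real) = 3 * ln 2" using ln_realpow[of "2::real" 3] by simp
    finally show ?thesis .
  qed
  have A1: "ln (1 + 1/16::real) \<le> 1/16" using ln_add_one_self_le_self[of "1/16::real"] by simp
  have B: "BB 5 (15/32) = ln (1 + 50625/947326)"
    using BB_alt[of 5 "15/32"] by (simp add: power_divide)
  have B1: "50625/947326 - (50625/947326)^2/2 \<le> ln (1 + 50625/947326::real)"
    by (rule ln_low2) simp
  have l2': "86/125 \<le> ln (2::real)" using l2 by simp
  have pos: "70 * ln 2 - 1 \<ge> (0::real)" using l2 by simp
  have b0: "50625/947326 - (50625/947326)^2/2 \<ge> (13/250::real)" by (simp add: power_divide)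
  have M: "(70 * ln 2 - 1) * ln (1 + 50625/947326::real) \<ge> (70 * ln 2 - 1) * (13/250)"
    using order_trans[OF b0 B1] pos by (rule mult_left_mono)
  have "AA (15/32) \<le> (d_lbd 5 - 1) * BB 5 (15/32)"
  proof -
    have M': "(70 * ln 2 - 1) * (13/250) = 70*(13/250)*ln 2 - (13/250::real)" by (simp add: field_simps)
    show ?thesis unfolding A B dl using A1 l2' M M' by linarith
  qed
  thus ?thesis unfolding L using RR_le_iff[of 5 "15/32"] by simp
qed

lemma C5_4: "RR 4 (1/2 - (1/2)^4/2/2) \<le> d_ubd 4 - 1"
proof -
  have l2: "0.688 \<le> ln (2::real)" "ln (2::real) \<le> 0.6934" using ln2_low ln2_up by auto
  have L: "(1/2 - (1/2)^4/2/2::real) = 31/64" by (simp add: power_divide)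
  have du: "d_ubd 4 = 32 * ln 2" by (simp add: d_ubd_def)
  have A: "AA (31/64) = 4 * ln 2 + ln (1 + 1/32)"
  proof -
    have "AA (31/64) = ln ((1 - 31/64)/(1 - 2*(31/64)))" by (rule AA_alt) simp
    also have "(1 - 31/64)/(1 - 2*(31/64)) = (16::real) * (1 + 1/32)" by simp
    also have "ln ((16::real) * (1 + 1/32)) = ln 16 + ln (1 + 1/32)" by (rule ln_mult_pos) auto
    also have "ln (16::real) = 4 * ln 2" using ln_realpow[of "2::real" 4] by simp
    finally show ?thesis .
  qed
  have A1: "ln (1 + 1/32::real) \<le> 1/32" using ln_add_one_self_le_self[of "1/32::real"] by simp
  have B: "BB 4 (31/64) = ln (1 + 29791/202562)"
    using BB_alt[of 4 "31/64"] by (simp add: power_divide)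
  have B1: "29791/202562 - (29791/202562)^2/2 \<le> ln (1 + 29791/202562::real)"
    by (rule ln_low2) simp
  have l2': "86/125 \<le> ln (2::real)" using l2 by simp
  have pos: "32 * ln 2 - 1 \<ge> (0::real)" using l2 by simp
  have b0: "29791/202562 - (29791/202562)^2/2 \<ge> (681/5000::real)" by (simp add: power_divide)
  have M: "(32 * ln 2 - 1) * ln (1 + 29791/202562::real) \<ge> (32 * ln 2 - 1) * (681/5000)"
    using order_trans[OF b0 B1] pos by (rule mult_left_mono)
  have "AA (31/64) \<le> (d_ubd 4 - 1) * BB 4 (31/64)"
  proof -
    have M': "(32 * ln 2 - 1) * (681/5000) = 32*(681/5000)*ln 2 - (681/5000::real)" by (simp add: field_simps)
    show ?thesis unfolding A B du using A1 l2' M M' by linarith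
  qed
  thus ?thesis unfolding L using RR_le_iff[of 4 "31/64"] by simp
qed

lemma C5D_4:
  assumes x: "1/2 - (1/2)^4/2/2 \<le> x" "x \<le> 1/2"
  shows "PhiD 4 (d_ubd 4) x \<ge> 0"
proof -
  have l2: "0.688 \<le> ln (2::real)" "ln (2::real) \<le> 0.6934" using ln2_low ln2_up by auto
  have L: "(1/2 - (1/2)^4/2/2::real) = 31/64" by (simp add: power_divide)
  have du: "d_ubd 4 = 32 * ln 2" by (simp add: d_ubd_def)
  have x0: "0 < x" using x L by simp
  have A0: "x^(4-1) \<le> 1/8" using a_bounds[of 4 x] x0 x by simp
  have "PhiD 4 (d_ubd 4) x \<ge> 1/(1/2+1/64) - d_ubd 4*(real 4 - 1)*(1/8)*(2*(1/64))/((31/64)*(1-1/8)*(1-1/8)) - 2*real 4*(1/8)/(1-1/8)"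
    by (rule PhiD_ge) (use x A0 L l2 in \<open>auto simp: du\<close>)
  thus ?thesis unfolding du using l2 by simp
qed

lemma C4_4: "Phi 4 (d_lbd 4) (1/2) > 2*(1/2)^4"
proof -
  have l2: "0.688 \<le> ln (2::real)" "ln (2::real) \<le> 0.6934" using ln2_low ln2_up by auto
  have dl: "d_lbd 4 = 16.7" by (simp add: d_lbd_def)
  have H: "Phi 4 (d_lbd 4) (1/2) = ln 2 + 16.7 / 4 * ln (1 - 2*(1/2)^4)"
    using Phi_half[of 4 "d_lbd 4"] unfolding dl by simp
  have e: "ln (1 - 2*(1/2)^4::real) = - ln (1 + 1/7)"
  proof -
    have "(1 - 2*(1/2)^4::real) = inverse (1 + 1/7)" by (simp add: power_divide)
    thus ?thesis by (simp only: ln_inverse)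
  qed
  have u: "ln (1 + 1/7::real) \<le> 1/7 - (1/7)^2/2 + (1/7)^3/3" by (rule ln_up3) simp
  show ?thesis unfolding H e using u l2 by (simp add: power_divide)
qed


lemma final_generic:
  assumes k: "k \<ge> 4" and dl: "1 \<le> dl" "dl \<le> d_ubd k"
    and C2: "RR k (1/2 - (1/2)^k) \<le> dl - 1"
    and C4: "Phi k dl (1/2) > 2*(1/2)^k"
    and x1: "1/2 - (1/2)^k \<le> x1" "x1 < 1/2" and C5: "RR k x1 \<le> d_ubd k - 1"
    and C5D: "\<And>x. x1 \<le> x \<Longrightarrow> x \<le> 1/2 \<Longrightarrow> PhiD k (d_ubd k) x \<ge> 0"
    and C3: "d_ubd k - 1 \<le> RR k (1/2 - (1/2)^k/64)"
    and Cu: "Phi k (d_ubd k) (1/2) < 0"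
  shows "continuous_on {dl .. d_ubd k} (Phi_star k) \<and> Phi_star k dl > 0 \<and> Phi_star k (d_ubd k) < 0"
proof -
  define q :: real where "q = (1/2)^k"
  have q: "0 < q" "q \<le> 1/16" using kq_bounds[OF k] by (auto simp: q_def)
  define L where "L = 1/2 - q"
  define M where "M = 1/2 - q/64"
  have LM: "L \<le> M" "M < 1/2" "0 < L" using q by (auto simp: L_def M_def)
  have LM': "1/2 - (1/2)^k \<le> 1/2 - (1/2::real)^k/64" "1/2 - (1/2::real)^k/64 < 1/2" using LM unfolding L_def M_def q_def by auto
  note XP0 = xfix_props[OF k dl C2 LM' C3]
  have XP: "\<forall>d\<in>{dl..d_ubd k}. L \<le> xfix k d \<and> xfix k d \<le> M \<and> RR k (xfix k d) = d - 1"
     "continuous_on {dl..d_ubd k} (xfix k)" using XP0 unfolding L_def M_def q_def by auto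
  have xf: "\<And>d. d \<in> {dl..d_ubd k} \<Longrightarrow> L \<le> xfix k d \<and> xfix k d \<le> M \<and> RR k (xfix k d) = d - 1"
    using XP(1) by blast
  have cx: "continuous_on {dl..d_ubd k} (xfix k)" by (rule XP(2))
  have cont: "continuous_on {dl..d_ubd k} (Phi_star k)"
  proof -
    have pos: "\<And>d. d \<in> {dl..d_ubd k} \<Longrightarrow> 0 < xfix k d \<and> xfix k d < 1/2 \<and> d \<noteq> 0"
      using xf LM dl by fastforce
    have "continuous_on {dl..d_ubd k} (\<lambda>d. - ln (1 - xfix k d) - d * (1 - 1 / real k - 1 / d) * ln (1 - 2 * xfix k d ^ k)
       + (d - 1) * ln (1 - xfix k d ^ (k - 1)))"
    proof (intro continuous_intros cx ballI)
      fix d assume d: "d \<in> {dl..d_ubd k}"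
      have p: "0 < xfix k d" "xfix k d < 1/2" "d \<noteq> 0" using pos[OF d] by auto
      have a1: "xfix k d ^ (k-1) \<le> 1/8" using a_bounds[OF k p(1)] p by simp
      have a2: "xfix k d ^ k \<le> xfix k d ^ (k-1)" using p k by (intro power_decreasing) auto
      show "1 - xfix k d \<noteq> 0" using p by simp
      show "d \<noteq> 0" by (rule p(3))
      show "1 - 2 * xfix k d ^ k \<noteq> 0" using a1 a2 by simp
      show "1 - xfix k d ^ (k-1) \<noteq> 0" using a1 by simp
    qed
    thus ?thesis unfolding Phi_star_def[abs_def] Phi_def by simp
  qed
  have dlin: "dl \<in> {dl..d_ubd k}" "d_ubd k \<in> {dl..d_ubd k}" using dl by auto
  have lower: "Phi_star k dl > 0"
  proof -
    have x: "L \<le> xfix k dl" "xfix k dl \<le> 1/2" using xf[OF dlin(1)] LM by auto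
    have "Phi k dl (xfix k dl) \<ge> Phi k dl (1/2) - 2*(1/2 - xfix k dl)"
      by (rule Phi_lower[OF k dl(1)]) (use x in \<open>auto simp: L_def q_def\<close>)
    moreover have "2*(1/2 - xfix k dl) \<le> 2*q" using x by (simp add: L_def)
    ultimately show ?thesis unfolding Phi_star_def using C4 unfolding q_def by linarith
  qed
  have upper: "Phi_star k (d_ubd k) < 0"
  proof -
    let ?x = "xfix k (d_ubd k)"
    have x: "L \<le> ?x" "?x \<le> M" "RR k ?x = d_ubd k - 1" using xf[OF dlin(2)] by auto
    have "x1 \<le> ?x"
    proof (rule ccontr)
      assume "\<not> x1 \<le> ?x"
      hence "?x < x1" by simp
      moreover have "1/2 - (1/2)^k \<le> ?x" using x by (simp add: L_def q_def)
      ultimately have "RR k ?x < RR k x1" using RR_mono[OF k _ _ x1(2)] by blast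
      thus False using x C5 by simp
    qed
    hence "Phi k (d_ubd k) ?x \<le> Phi k (d_ubd k) (1/2)"
      using Phi_upper[OF k _ _ _ C5D] dl LM x by auto
    thus ?thesis unfolding Phi_star_def using Cu by simp
  qed
  show ?thesis using cont lower upper by simp
qed


theorem lemma3p2:
  fixes k :: nat
  assumes "k \<ge> 4"
  shows "continuous_on {d_lbd k .. d_ubd k} (Phi_star k)
         \<and> Phi_star k (d_lbd k) > 0
         \<and> Phi_star k (d_ubd k) < 0"
proof -
  have k: "k \<ge> 4" by (rule assms)
  have l2: "0.688 \<le> ln (2::real)" "ln (2::real) \<le> 0.6934" using ln2_low ln2_up by auto
  have q: "(1/2::real)^k \<le> 1/16" "0 < (1/2::real)^k" using kq_bounds[OF k] by auto
  show ?thesis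
  proof (cases "k = 4")
    case True
    have dl: "d_lbd 4 = 16.7" by (simp add: d_lbd_def)
    have du: "d_ubd 4 = 32 * ln 2" by (simp add: d_ubd_def)
    have x1: "1/2 - (1/2)^4 \<le> 1/2 - (1/2::real)^4/2/2" "1/2 - (1/2::real)^4/2/2 < 1/2" by auto
    show ?thesis unfolding True
    proof (rule final_generic[OF _ _ _ C2_4 C4_4 x1 C5_4 C5D_4 C3 C_ubd])
      show "1 \<le> d_lbd 4" unfolding dl by simp
      show "d_lbd 4 \<le> d_ubd 4" unfolding dl du using l2 by simp
    qed auto
  next
    case False
    hence k5: "k \<ge> 5" using k by simp
    have p: "(2::real)^(k-1) \<ge> 2^4" using k5 by (intro power_increasing) auto
    have kl: "real k * ln 2 \<ge> 0" using l2 by simp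
    have dl1: "1 \<le> d_lbd k"
    proof -
      have "(2^(k-1) - 2) * real k * ln 2 \<ge> 14 * 5 * 0.688" using p k5 l2
        by (intro mult_mono) auto
      thus ?thesis unfolding d_lbd_def using False by simp
    qed
    have dl2: "d_lbd k \<le> d_ubd k" unfolding d_lbd_def d_ubd_def using False kl
      by (simp add: algebra_simps)
    have C2: "RR k (1/2 - (1/2)^k) \<le> d_lbd k - 1"
    proof (cases "k = 5")
      case True thus ?thesis using C2_5 by simp
    next
      case False thus ?thesis using C2_gen k5 by simp
    qed
    have x1: "1/2 - (1/2)^k \<le> 1/2 - (1/2::real)^k/2" "1/2 - (1/2::real)^k/2 < 1/2" using q by auto
    show ?thesis
      by (rule final_generic[OF k dl1 dl2 C2 C4_gen[OF k5] x1 C5_gen[OF k5] C5D_gen[OF k5] C3[OF k] C_ubd[OF k]])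
  qed
qed


end
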